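(* Let $(\sigma'_1,\sigma'_2)$ be any pair of maps satisfying conditions (1)–(6) below, let $t$ be a well-formed tree over $\tilde A_{i,k}$ and $P$ a player with $\sigma'_P(t)<_{lex}\infty$. Then there exists a $\sigma'$-optimal strategy of $P$ in $\mathcal G(t)$.
   Context: Fix natural numbers $i<k$. Trees over a ranked alphabet are partial maps $t:\omega^*\to A$ with non-empty prefix-closed domain where a node with an $m$-ary label has exactly the children $u0,\ldots,u(m-1)$; $t{\upharpoonright}u$ is the subtree at $u$. The alphabet $\tilde A_{i,k}$ has unary letters $p_i,\ldots,p_k$, a unary letter $\sim$, and binary letters $c_1,c_2$. Players $1,2$; $\bar P$ the opponent. Well-formed: no branch has infinitely many $\sim$. A node $u$ is switched if an odd number of strict prefixes $w\prec u$ have $t(w)=\sim$, kept otherwise. The game $\mathcal G(t)$: positions are nodes, moves to children, start at the root; $u$ is controlled by $P$ iff ($u$ kept and $t(u)=c_P$) or ($u$ switched and $t(u)=c_{\bar P}$). Winning plays: player 1 wins an infinite play iff it is (eventually) kept and the least $j$ with infinitely many nodes labelled $p_j$ is even, or (eventually) switched and this $j$ is odd (take $j=k$ if none occurs infinitely often). A strategy of $P$ is a set $\Sigma\subseteq\mathrm{dom}(t)$ containing the root, prefix-closed, where each $u\in\Sigma$ controlled by $P$ has exactly one child in $\Sigma$ and each other $u\in\Sigma$ has all children in $\Sigma$. $P$-losing numbers: $j\in\{i,\ldots,k\}$ odd for $P=1$, even for $P=2$; others are $P$-winning; $i',k'$ least/largest $P$-losing. A $P$-signature is $\infty$ or a tuple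 $(\theta_{i'},\theta_{i'+2},\ldots,\theta_{k'})$ of countable ordinals, ordered lexicographically (smaller index more significant), $\infty$ largest. The pair $(\sigma'_1,\sigma'_2)$ satisfies, for all $P$, well-formed $t,t_L,t_R$, $j\in\{i..k\}$: (1) $\sigma'_P(t)=\infty$ iff $P$ does not win $\mathcal G(t)$; (2) $\sigma'_P(\sim(t))=(0,\ldots,0)$ if $P$ wins $\mathcal G(\sim(t))$; (3) if $\sigma'_P(t)=(\theta_{i'},\ldots,\theta_{k'})$ and $j$ is $P$-winning then $\sigma'_P(p_j(t))=(\theta_{i'},\ldots,\theta_{j-1},0,\ldots,0)$; (4) if $j$ is $P$-losing then $\sigma'_P(p_j(t))=(\theta_{i'},\ldots,\theta_{j-2},\theta_j+1,0,\ldots,0)$; (5) $\sigma'_P(c_P(t_L,t_R))=\min\{\sigma'_P(t_L),\sigma'_P(t_R)\}$; (6) $\sigma'_P(c_{\bar P}(t_L,t_R))=\max\{\sigma'_P(t_L),\sigma'_P(t_R)\}$. A strategy $\Sigma$ of $P$ is $\sigma'$-optimal if for each $u\in\Sigma$ controlled by $P$, writing $t{\upharpoonright}u=c_Q(t_L,t_R)$ ($Q=P$ if $u$ kept, $Q=\bar P$ if switched), $\Sigma$ contains $u0$ only if $\sigma'_Q(t_L)\le_{lex}\sigma'_Q(t_R)$ and $u1$ only if $\sigma'_Q(t_L)\ge_{lex}\sigma'_Q(t_R)$. *)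

theory Defs
  imports Main "HOL-Library.Sublist" "HOL-Library.Countable_Set"
begin

datatype player = Pl1 | Pl2

fun opp :: "player \<Rightarrow> player" where
  "opp Pl1 = Pl2" | "opp Pl2 = Pl1"

datatype lab = Pj nat | Sw | Cp player

fun arity :: "lab \<Rightarrow> nat" where
  "arity (Pj j) = 1" | "arity Sw = 1" | "arity (Cp Q) = 2"

type_synonym tree = "nat list \<Rightarrow> lab option"

definition in_alph :: "nat \<Rightarrow> nat \<Rightarrow> lab \<Rightarrow> bool" where
  "in_alph i k a = (case a of Pj j \<Rightarrow> i \<le> j \<and> j \<le> k | _ \<Rightarrow> True)"

definition is_tree :: "nat \<Rightarrow> nat \<Rightarrow> tree \<Rightarrow> bool" where
  "is_tree i k t \<longleftrightarrow>
     t [] \<noteq> None \<and>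
     (\<forall>u v. t (u @ v) \<noteq> None \<longrightarrow> t u \<noteq> None) \<and>
     (\<forall>u a. t u = Some a \<longrightarrow> in_alph i k a \<and> (\<forall>n. t (u @ [n]) \<noteq> None \<longleftrightarrow> n < arity a))"

definition bnode :: "(nat \<Rightarrow> nat) \<Rightarrow> nat \<Rightarrow> nat list" where
  "bnode d n = map d [0..<n]"

definition is_branch :: "tree \<Rightarrow> (nat \<Rightarrow> nat) \<Rightarrow> bool" where
  "is_branch t d \<longleftrightarrow> (\<forall>n. t (bnode d n) \<noteq> None)"

definition well_formed :: "nat \<Rightarrow> nat \<Rightarrow> tree \<Rightarrow> bool" where
  "well_formed i k t \<longleftrightarrow> is_tree i k t \<and>
     (\<forall>d. is_branch t d \<longrightarrow> finite {n. t (bnode d n) = Some Sw})"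

definition subtree :: "tree \<Rightarrow> nat list \<Rightarrow> tree" where
  "subtree t u = (\<lambda>w. t (u @ w))"

definition unary :: "lab \<Rightarrow> tree \<Rightarrow> tree" where
  "unary a t = (\<lambda>u. case u of [] \<Rightarrow> Some a | n # w \<Rightarrow> (if n = 0 then t w else None))"

definition binary :: "lab \<Rightarrow> tree \<Rightarrow> tree \<Rightarrow> tree" where
  "binary a tL tR = (\<lambda>u. case u of [] \<Rightarrow> Some a
      | n # w \<Rightarrow> (if n = 0 then tL w else if n = 1 then tR w else None))"

definition switched :: "tree \<Rightarrow> nat list \<Rightarrow> bool" where
  "switched t u \<longleftrightarrow> odd (card {w. strict_prefix w u \<and> t w = Some Sw})"

definition controlled :: "tree \<Rightarrow> player \<Rightarrow> nat list \<Rightarrow> bool" where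
  "controlled t P u \<longleftrightarrow>
     (\<not> switched t u \<and> t u = Some (Cp P)) \<or> (switched t u \<and> t u = Some (Cp (opp P)))"

definition inf_prio :: "nat \<Rightarrow> tree \<Rightarrow> (nat \<Rightarrow> nat) \<Rightarrow> nat" where
  "inf_prio k t d = (if \<exists>j. infinite {n. t (bnode d n) = Some (Pj j)}
                     then (LEAST j. infinite {n. t (bnode d n) = Some (Pj j)}) else k)"

definition wins_play1 :: "nat \<Rightarrow> tree \<Rightarrow> (nat \<Rightarrow> nat) \<Rightarrow> bool" where
  "wins_play1 k t d \<longleftrightarrow>
     ((\<exists>N. \<forall>n\<ge>N. \<not> switched t (bnode d n)) \<and> even (inf_prio k t d)) \<or>
     ((\<exists>N. \<forall>n\<ge>N. switched t (bnode d n)) \<and> odd (inf_prio k t d))"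

definition wins_play :: "nat \<Rightarrow> tree \<Rightarrow> player \<Rightarrow> (nat \<Rightarrow> nat) \<Rightarrow> bool" where
  "wins_play k t P d = (if P = Pl1 then wins_play1 k t d else \<not> wins_play1 k t d)"

definition is_strategy :: "tree \<Rightarrow> player \<Rightarrow> nat list set \<Rightarrow> bool" where
  "is_strategy t P S \<longleftrightarrow>
     S \<subseteq> {u. t u \<noteq> None} \<and> [] \<in> S \<and>
     (\<forall>u v. u @ v \<in> S \<longrightarrow> u \<in> S) \<and>
     (\<forall>u\<in>S. controlled t P u \<longrightarrow> (\<exists>!n. t (u @ [n]) \<noteq> None \<and> u @ [n] \<in> S)) \<and>
     (\<forall>u\<in>S. \<not> controlled t P u \<longrightarrow> (\<forall>n. t (u @ [n]) \<noteq> None \<longrightarrow> u @ [n] \<in> S))"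

definition wins :: "nat \<Rightarrow> tree \<Rightarrow> player \<Rightarrow> bool" where
  "wins k t P \<longleftrightarrow> (\<exists>S. is_strategy t P S \<and>
     (\<forall>d. (\<forall>n. bnode d n \<in> S) \<longrightarrow> wins_play k t P d))"

definition losing :: "nat \<Rightarrow> nat \<Rightarrow> player \<Rightarrow> nat \<Rightarrow> bool" where
  "losing i k P j \<longleftrightarrow> i \<le> j \<and> j \<le> k \<and> (if P = Pl1 then odd j else even j)"

text \<open>The P-losing numbers i', i'+2, ..., k' in increasing order; a finite P-signature is a
  list of ordinals indexed (positionwise) by this list.\<close>
definition lose_idx :: "nat \<Rightarrow> nat \<Rightarrow> player \<Rightarrow> nat list" where
  "lose_idx i k P = filter (losing i k P) [i..<Suc k]"

datatype 'o sig = Fin "'o list" | Infty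

text \<open>Ordinals: a wellorder type; the zero ordinal and the successor.\<close>
definition ozero :: "'o::wellorder" where
  "ozero = (LEAST x. True)"

definition osuc :: "'o::wellorder \<Rightarrow> 'o" where
  "osuc x = (LEAST y. x < y)"

definition lex_less :: "'o::linorder list \<Rightarrow> 'o list \<Rightarrow> bool" where
  "lex_less a b \<longleftrightarrow> (\<exists>n < length a. n < length b \<and> take n a = take n b \<and> a ! n < b ! n)"

fun sig_le :: "'o::linorder sig \<Rightarrow> 'o sig \<Rightarrow> bool" where
  "sig_le (Fin a) (Fin b) \<longleftrightarrow> a = b \<or> lex_less a b"
| "sig_le _ Infty \<longleftrightarrow> True"
| "sig_le Infty (Fin b) \<longleftrightarrow> False"

definition sig_min :: "'o::linorder sig \<Rightarrow> 'o sig \<Rightarrow> 'o sig" where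
  "sig_min x y = (if sig_le x y then x else y)"

definition sig_max :: "'o::linorder sig \<Rightarrow> 'o sig \<Rightarrow> 'o sig" where
  "sig_max x y = (if sig_le x y then y else x)"

definition sig_win_upd :: "nat \<Rightarrow> nat \<Rightarrow> player \<Rightarrow> nat \<Rightarrow> 'o::wellorder list \<Rightarrow> 'o list" where
  "sig_win_upd i k P j th = map (\<lambda>(l, x). if l < j then x else ozero) (zip (lose_idx i k P) th)"

definition sig_lose_upd :: "nat \<Rightarrow> nat \<Rightarrow> player \<Rightarrow> nat \<Rightarrow> 'o::wellorder list \<Rightarrow> 'o list" where
  "sig_lose_upd i k P j th = map (\<lambda>(l, x). if l < j then x else if l = j then osuc x else ozero)
      (zip (lose_idx i k P) th)"

text \<open>The pair (sigma'_1, sigma'_2), as sigma P, satisfies conditions (1)--(6); values of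
  sigma P on well-formed trees are P-signatures (tuples of the right length).\<close>
definition sig_conditions :: "nat \<Rightarrow> nat \<Rightarrow> (player \<Rightarrow> tree \<Rightarrow> 'o::wellorder sig) \<Rightarrow> bool" where
  "sig_conditions i k \<sigma> \<longleftrightarrow>
    (\<forall>P t th. well_formed i k t \<longrightarrow> \<sigma> P t = Fin th \<longrightarrow> length th = length (lose_idx i k P)) \<and>
    (\<forall>P t. well_formed i k t \<longrightarrow> (\<sigma> P t = Infty \<longleftrightarrow> \<not> wins k t P)) \<and>
    (\<forall>P t. well_formed i k t \<longrightarrow> wins k (unary Sw t) P \<longrightarrow>
        \<sigma> P (unary Sw t) = Fin (replicate (length (lose_idx i k P)) ozero)) \<and>
    (\<forall>P t j th. well_formed i k t \<longrightarrow> i \<le> j \<longrightarrow> j \<le> k \<longrightarrow> \<not> losing i k P j \<longrightarrow>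
        \<sigma> P t = Fin th \<longrightarrow> \<sigma> P (unary (Pj j) t) = Fin (sig_win_upd i k P j th)) \<and>
    (\<forall>P t j th. well_formed i k t \<longrightarrow> losing i k P j \<longrightarrow>
        \<sigma> P t = Fin th \<longrightarrow> \<sigma> P (unary (Pj j) t) = Fin (sig_lose_upd i k P j th)) \<and>
    (\<forall>P tL tR. well_formed i k tL \<longrightarrow> well_formed i k tR \<longrightarrow>
        \<sigma> P (binary (Cp P) tL tR) = sig_min (\<sigma> P tL) (\<sigma> P tR)) \<and>
    (\<forall>P tL tR. well_formed i k tL \<longrightarrow> well_formed i k tR \<longrightarrow>
        \<sigma> P (binary (Cp (opp P)) tL tR) = sig_max (\<sigma> P tL) (\<sigma> P tR))"

text \<open>sigma'-optimal strategy.  For u controlled by P, t restricted to u is c_Q(tL,tR)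
  with Q = P if u is kept and Q = opp P if u is switched.\<close>
definition optimal :: "(player \<Rightarrow> tree \<Rightarrow> 'o::linorder sig) \<Rightarrow> tree \<Rightarrow> player \<Rightarrow> nat list set \<Rightarrow> bool" where
  "optimal \<sigma> t P S \<longleftrightarrow>
    (\<forall>u\<in>S. controlled t P u \<longrightarrow>
      (let Q = (if switched t u then opp P else P);
           sL = \<sigma> Q (subtree t (u @ [0])); sR = \<sigma> Q (subtree t (u @ [1]))
       in (u @ [0] \<in> S \<longrightarrow> sig_le sL sR) \<and> (u @ [1] \<in> S \<longrightarrow> sig_le sR sL)))"

end

theory Submission
  imports Defs
begin

lemma bnode_Suc: "bnode d (Suc n) = bnode d n @ [d n]"
  by (simp add: bnode_def)

lemma bnode_shift:
  fixes v :: "nat list" and d :: "nat \<Rightarrow> nat"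
  defines "d' \<equiv> (\<lambda>n. if n < length v then v ! n else d (n - length v))"
  shows "bnode d' n = (if n \<le> length v then take n v else v @ bnode d (n - length v))"
proof (induction n)
  case 0 then show ?case by (simp add: bnode_def)
next
  case (Suc n)
  show ?case
  proof (cases "Suc n \<le> length v")
    case True
    then show ?thesis using Suc by (simp add: bnode_Suc d'_def take_Suc_conv_app_nth)
  next
    case False
    show ?thesis
    proof (cases "n = length v")
      case True
      then show ?thesis using Suc by (simp add: bnode_Suc d'_def bnode_def)
    next
      case F2: False
      then have "Suc n - length v = Suc (n - length v)" using False by simp
      then show ?thesis using Suc False F2 by (simp add: bnode_Suc d'_def)
    qed
  qed
qed

lemma wf_subtree:
  assumes wf: "well_formed i k t" and tv: "t v \<noteq> None"
  shows "well_formed i k (subtree t v)"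
proof -
  have it: "is_tree i k t" using wf by (simp add: well_formed_def)
  have pre: "\<And>u w. t (u @ w) \<noteq> None \<Longrightarrow> t u \<noteq> None" using it unfolding is_tree_def by blast
  have lab: "\<And>u a. t u = Some a \<Longrightarrow> in_alph i k a \<and> (\<forall>n. t (u @ [n]) \<noteq> None \<longleftrightarrow> n < arity a)"
    using it unfolding is_tree_def by blast
  have "is_tree i k (subtree t v)"
    unfolding is_tree_def subtree_def
  proof (intro conjI allI impI)
    show "t (v @ []) \<noteq> None" using tv by simp
  next
    fix u w assume "t (v @ u @ w) \<noteq> None"
    then show "t (v @ u) \<noteq> None" using pre[of "v @ u" w] by simp
  next
    fix u a assume "t (v @ u) = Some a"
    then show "in_alph i k a" using it unfolding is_tree_def by blast
  next
    fix u a n assume "t (v @ u) = Some a"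
    then show "(t (v @ u @ [n]) \<noteq> None) = (n < arity a)"
      using lab[of "v @ u" a] by simp
  qed
  moreover have "finite {n. subtree t v (bnode d n) = Some Sw}" if br: "is_branch (subtree t v) d" for d
  proof -
    define d' where "d' \<equiv> (\<lambda>n. if n < length v then v ! n else d (n - length v))"
    have bn: "bnode d' n = (if n \<le> length v then take n v else v @ bnode d (n - length v))" for n
      using bnode_shift[of v d n] by (simp add: d'_def)
    have "is_branch t d'"
      unfolding is_branch_def
    proof
      fix n
      show "t (bnode d' n) \<noteq> None"
      proof (cases "n \<le> length v")
        case True
        then show ?thesis using bn[of n] tv pre[of "take n v" "drop n v"] by simp
      next
        case False
        then show ?thesis using bn[of n] br by (simp add: is_branch_def subtree_def)
      qed
    qed
    then have fin: "finite {n. t (bnode d' n) = Some Sw}" using wf by (simp add: well_formed_def)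
    have "{n. subtree t v (bnode d n) = Some Sw} \<subseteq> (\<lambda>m. m - length v) ` {n. t (bnode d' n) = Some Sw}"
    proof
      fix n assume "n \<in> {n. subtree t v (bnode d n) = Some Sw}"
      then have "t (bnode d' (n + length v)) = Some Sw"
        using bn[of "n + length v"] by (cases n) (auto simp: subtree_def bnode_def)
      then show "n \<in> (\<lambda>m. m - length v) ` {n. t (bnode d' n) = Some Sw}"
        by (intro image_eqI[of _ _ "n + length v"]) auto
    qed
    then show ?thesis using fin finite_surj by blast
  qed
  ultimately show ?thesis by (simp add: well_formed_def)
qed

lemma lex_total:
  fixes a b :: "'o::linorder list"
  shows "length a = length b \<Longrightarrow> a = b \<or> lex_less a b \<or> lex_less b a"
proof (induction a arbitrary: b)
  case Nil then show ?case by simp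
next
  case (Cons x a)
  then obtain y b' where b: "b = y # b'" "length a = length b'" by (cases b) auto
  show ?case
  proof (cases "x = y")
    case True
    from Cons.IH[OF b(2)] consider "a = b'" | "lex_less a b'" | "lex_less b' a" by blast
    then show ?thesis
    proof cases
      case 1 then show ?thesis using b True by simp
    next
      case 2
      then obtain n where "n < length a" "n < length b'" "take n a = take n b'" "a ! n < b' ! n"
        unfolding lex_less_def by blast
      then have "lex_less (x # a) b" unfolding lex_less_def b True
        using b(2) by (intro exI[of _ "Suc n"]) auto
      then show ?thesis by simp
    next
      case 3
      then obtain n where "n < length a" "n < length b'" "take n b' = take n a" "b' ! n < a ! n"
        unfolding lex_less_def by blast
      then have "lex_less b (x # a)" unfolding lex_less_def b True
        using b(2) by (intro exI[of _ "Suc n"]) auto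
      then show ?thesis by simp
    qed
  next
    case False
    then have "x < y \<or> y < x" by auto
    then show ?thesis
    proof
      assume "x < y" then have "lex_less (x # a) b" unfolding lex_less_def b by (intro exI[of _ 0]) auto
      then show ?thesis by simp
    next
      assume "y < x" then have "lex_less b (x # a)" unfolding lex_less_def b by (intro exI[of _ 0]) auto
      then show ?thesis by simp
    qed
  qed
qed

lemma sig_le_total:
  assumes "\<And>a b. x = Fin a \<Longrightarrow> y = Fin b \<Longrightarrow> length a = length b"
  shows "sig_le x y \<or> sig_le y x"
proof (cases x)
  case (Fin a)
  then show ?thesis
  proof (cases y)
    case (Fin b)
    then show ?thesis using \<open>x = Fin a\<close> assms lex_total[of a b] by auto
  qed simp
next
  case Infty then show ?thesis by (cases y) auto
qed

theorem mainTheorem16: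
  fixes i k :: nat
    and \<sigma> :: "player \<Rightarrow> tree \<Rightarrow> 'o::wellorder sig"
    and t :: tree and P :: player
  assumes "i < k"
    and "\<forall>x::'o. countable {y. y < x}"
    and "uncountable (UNIV :: 'o set)"
    and "sig_conditions i k \<sigma>"
    and "well_formed i k t"
    and "\<sigma> P t \<noteq> Infty"
  shows "\<exists>S. is_strategy t P S \<and> optimal \<sigma> t P S"
proof -
  note wf = assms(5)
  have it: "is_tree i k t" using wf by (simp add: well_formed_def)
  have pre: "\<And>u w. t (u @ w) \<noteq> None \<Longrightarrow> t u \<noteq> None" using it unfolding is_tree_def by blast
  have lab: "\<And>u a. t u = Some a \<Longrightarrow> (\<forall>n. t (u @ [n]) \<noteq> None \<longleftrightarrow> n < arity a)"
    using it unfolding is_tree_def by blast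
  have len: "\<And>Q s th. well_formed i k s \<Longrightarrow> \<sigma> Q s = Fin th \<Longrightarrow> length th = length (lose_idx i k Q)"
    using assms(4) unfolding sig_conditions_def by (elim conjE) blast
  define sL where "sL u = \<sigma> (if switched t u then opp P else P) (subtree t (u @ [0]))" for u
  define sR where "sR u = \<sigma> (if switched t u then opp P else P) (subtree t (u @ [1]))" for u
  define ch where "ch u = (if sig_le (sL u) (sR u) then 0 else (1::nat))" for u
  define S where "S = {u. t u \<noteq> None \<and> (\<forall>m < length u. controlled t P (take m u) \<longrightarrow> u ! m = ch (take m u))}"
  have ctrl_ch: "t (u @ [0]) \<noteq> None \<and> t (u @ [1]) \<noteq> None" if "controlled t P u" for u
  proof -
    from that obtain Q where "t u = Some (Cp Q)" unfolding controlled_def by blast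
    then show ?thesis using lab by force
  qed
  have tot: "sig_le (sL u) (sR u) \<or> sig_le (sR u) (sL u)" if "controlled t P u" for u
  proof (rule sig_le_total)
    fix a b assume "sL u = Fin a" "sR u = Fin b"
    then show "length a = length b"
      using len[OF wf_subtree[OF wf, of "u @ [0]"]] len[OF wf_subtree[OF wf, of "u @ [1]"]]
        ctrl_ch[OF that] unfolding sL_def sR_def by metis
  qed
  have "is_strategy t P S"
    unfolding is_strategy_def
  proof (intro conjI ballI allI impI)
    show "S \<subseteq> {u. t u \<noteq> None}" by (auto simp: S_def)
    show "[] \<in> S" using it by (simp add: S_def is_tree_def)
  next
    fix u v assume h: "u @ v \<in> S"
    show "u \<in> S" unfolding S_def
    proof (intro CollectI conjI allI impI)
      show "t u \<noteq> None" using h pre by (auto simp: S_def)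
    next
      fix m assume m: "m < length u" "controlled t P (take m u)"
      have "controlled t P (take m (u @ v))" using m by simp
      moreover have "m < length (u @ v)" using m by simp
      ultimately have "(u @ v) ! m = ch (take m (u @ v))" using h by (simp add: S_def)
      then show "u ! m = ch (take m u)" using m by (simp add: nth_append)
    qed
  next
    fix u assume uS: "u \<in> S" and c: "controlled t P u"
    have ch01: "ch u = 0 \<or> ch u = 1" by (simp add: ch_def)
    have in1: "t (u @ [ch u]) \<noteq> None \<and> u @ [ch u] \<in> S"
      using uS ch01 ctrl_ch[OF c] c unfolding S_def
      by (auto simp: nth_append less_Suc_eq)
    show "\<exists>!n. t (u @ [n]) \<noteq> None \<and> u @ [n] \<in> S"
    proof (rule ex1I[of _ "ch u"])
      show "t (u @ [ch u]) \<noteq> None \<and> u @ [ch u] \<in> S" by (rule in1)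
    next
      fix n assume "t (u @ [n]) \<noteq> None \<and> u @ [n] \<in> S"
      then have "\<forall>m < Suc (length u). controlled t P (take m (u @ [n])) \<longrightarrow> (u @ [n]) ! m = ch (take m (u @ [n]))"
        by (simp add: S_def)
      then have "controlled t P (take (length u) (u @ [n])) \<longrightarrow> (u @ [n]) ! length u = ch (take (length u) (u @ [n]))" by blast
      then show "n = ch u" using c by simp
    qed
  next
    fix u n assume uS: "u \<in> S" and c: "\<not> controlled t P u" and tn: "t (u @ [n]) \<noteq> None"
    show "u @ [n] \<in> S" using uS c tn unfolding S_def
      by (auto simp: nth_append less_Suc_eq)
  qed
  moreover have "optimal \<sigma> t P S"
    unfolding optimal_def Let_def
  proof (intro ballI impI conjI)
    fix u assume uS: "u \<in> S" and c: "controlled t P u"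
    have key: "u @ [n] \<in> S \<Longrightarrow> n = ch u" for n
    proof -
      assume "u @ [n] \<in> S"
      then have "\<forall>m < Suc (length u). controlled t P (take m (u @ [n])) \<longrightarrow> (u @ [n]) ! m = ch (take m (u @ [n]))"
        by (simp add: S_def)
      then have "controlled t P (take (length u) (u @ [n])) \<longrightarrow> (u @ [n]) ! length u = ch (take (length u) (u @ [n]))" by blast
      then show "n = ch u" using c by simp
    qed
    {
      assume "u @ [0] \<in> S"
      then have "ch u = 0" using key by force
      then show "sig_le (\<sigma> (if switched t u then opp P else P) (subtree t (u @ [0])))
                        (\<sigma> (if switched t u then opp P else P) (subtree t (u @ [1])))"
        unfolding ch_def sL_def sR_def by (auto split: if_splits)
    }
    {
      assume "u @ [1] \<in> S"
      then have "ch u = 1" using key by force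
      then show "sig_le (\<sigma> (if switched t u then opp P else P) (subtree t (u @ [1])))
                        (\<sigma> (if switched t u then opp P else P) (subtree t (u @ [0])))"
      proof -
        have "\<not> sig_le (sL u) (sR u)" using \<open>ch u = 1\<close> by (auto simp: ch_def split: if_splits)
        then have "sig_le (sR u) (sL u)" using tot[OF c] by blast
        then show ?thesis by (simp add: sL_def sR_def)
      qed
    }
  qed
  ultimately show ?thesis by blast
qed

end
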